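(* Let $f\in\mathscr{F}_r$ be normalized ($f(\emptyset)=0$) with $r$-decomposition $(V_i,f_i)_{i=1}^m$, and let $S\subseteq V$ be nonempty. Then the function $f^S:2^{V\setminus S}\to\mathbb{R}_+$ is nonnegative, monotone and supermodular. Moreover, it admits the $(r-1)$-decomposition $(V_i\setminus S,f_i^S)_{i\in I_S}$, i.e. $f^S(T)=\sum_{i\in I_S}f_i^S(T\cap(V_i\setminus S))$ for all $T\subseteq V\setminus S$ with $|V_i\setminus S|\le r-1$, where the functions $f_i^S$, $i\in I_S$, are nonnegative, monotone and supermodular.
   Context: $V$ is a finite set, $[m]=\{1,\dots,m\}$. Supermodular: $g(A)+g(B)\le g(A\cup B)+g(A\cap B)$; monotone: $g(B)\le g(A)$ for $B\subseteq A$. $\mathscr{F}_r$ is the family of nonnegative monotone supermodular $f:2^V\to\mathbb{R}_+$ admitting an $r$-decomposition $(V_i,f_i)_{i=1}^m$: subsets $V_i\subseteq V$ with $|V_i|\le r$ and nonnegative supermodular $f_i:2^{V_i}\to\mathbb{R}_+$ with $f(S)=\sum_i f_i(S\cap V_i)$ for all $S\subseteq V$. For nonempty $S\subseteq V$: $I_S=\{i\in[m]:V_i\cap S\ne\emptyset\}$; $f^S(T)=\sum_{i\in I_S}\big(f_i((S\cup T)\cap V_i)-f_i(S\cap V_i)\big)$ for $T\subseteq V\setminus S$; and for $i\in I_S$, $f_i^S:2^{V_i\setminus S}\to\mathbb{R}$, $f_i^S(T)=f_i((S\cup T)\cap V_i)-f_i(S\cap V_i)$. *)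

theory Defs
  imports Complex_Main
begin

definition nonneg_on :: "'a set \<Rightarrow> ('a set \<Rightarrow> real) \<Rightarrow> bool" where
  "nonneg_on D g \<longleftrightarrow> (\<forall>A. A \<subseteq> D \<longrightarrow> 0 \<le> g A)"

definition monotone_set_fun :: "'a set \<Rightarrow> ('a set \<Rightarrow> real) \<Rightarrow> bool" where
  "monotone_set_fun D g \<longleftrightarrow> (\<forall>A B. A \<subseteq> D \<longrightarrow> B \<subseteq> A \<longrightarrow> g B \<le> g A)"

definition supermodular_on :: "'a set \<Rightarrow> ('a set \<Rightarrow> real) \<Rightarrow> bool" where
  "supermodular_on D g \<longleftrightarrow>
     (\<forall>A B. A \<subseteq> D \<longrightarrow> B \<subseteq> D \<longrightarrow> g A + g B \<le> g (A \<union> B) + g (A \<inter> B))"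

definition decomposition_idx ::
  "'a set \<Rightarrow> ('a set \<Rightarrow> real) \<Rightarrow> nat \<Rightarrow> 'i set \<Rightarrow> ('i \<Rightarrow> 'a set) \<Rightarrow> ('i \<Rightarrow> 'a set \<Rightarrow> real) \<Rightarrow> bool"
where
  "decomposition_idx D g r I Vs fs \<longleftrightarrow>
     (\<forall>i\<in>I. Vs i \<subseteq> D \<and> card (Vs i) \<le> r \<and> nonneg_on (Vs i) (fs i) \<and> supermodular_on (Vs i) (fs i))
     \<and> (\<forall>S. S \<subseteq> D \<longrightarrow> g S = (\<Sum>i\<in>I. fs i (S \<inter> Vs i)))"

definition r_decomposition ::
  "'a set \<Rightarrow> ('a set \<Rightarrow> real) \<Rightarrow> nat \<Rightarrow> nat \<Rightarrow> (nat \<Rightarrow> 'a set) \<Rightarrow> (nat \<Rightarrow> 'a set \<Rightarrow> real) \<Rightarrow> bool"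
where
  "r_decomposition V f r m Vs fs \<longleftrightarrow> decomposition_idx V f r {1..m} Vs fs"

definition F_r :: "nat \<Rightarrow> 'a set \<Rightarrow> ('a set \<Rightarrow> real) set" where
  "F_r r V = {f. nonneg_on V f \<and> monotone_set_fun V f \<and> supermodular_on V f \<and>
                 (\<exists>m Vs fs. r_decomposition V f r m Vs fs)}"

definition I_S :: "nat \<Rightarrow> (nat \<Rightarrow> 'a set) \<Rightarrow> 'a set \<Rightarrow> nat set" where
  "I_S m Vs S = {i \<in> {1..m}. Vs i \<inter> S \<noteq> {}}"

definition f_S :: "nat \<Rightarrow> (nat \<Rightarrow> 'a set) \<Rightarrow> (nat \<Rightarrow> 'a set \<Rightarrow> real) \<Rightarrow> 'a set \<Rightarrow> 'a set \<Rightarrow> real" where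
  "f_S m Vs fs S T = (\<Sum>i\<in>I_S m Vs S. fs i ((S \<union> T) \<inter> Vs i) - fs i (S \<inter> Vs i))"

definition f_i_S :: "(nat \<Rightarrow> 'a set) \<Rightarrow> (nat \<Rightarrow> 'a set \<Rightarrow> real) \<Rightarrow> 'a set \<Rightarrow> nat \<Rightarrow> 'a set \<Rightarrow> real" where
  "f_i_S Vs fs S i T = fs i ((S \<union> T) \<inter> Vs i) - fs i (S \<inter> Vs i)"

end

theory Submission
  imports Defs
begin

lemma mono_from:
  assumes "nonneg_on D g" "supermodular_on D g" "g {} = 0"
  shows "monotone_set_fun D g"
  unfolding monotone_set_fun_def
proof (intro allI impI)
  fix A B assume h: "A \<subseteq> D" "B \<subseteq> A"
  have "g B + g (A - B) \<le> g (B \<union> (A - B)) + g (B \<inter> (A - B))"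
    using assms(2) h unfolding supermodular_on_def by (meson Diff_subset order_trans)
  moreover have "B \<union> (A - B) = A" "B \<inter> (A - B) = {}" using h by auto
  moreover have "0 \<le> g (A - B)" using assms(1) h unfolding nonneg_on_def by blast
  ultimately show "g B \<le> g A" using assms(3) by simp
qed

lemma shift_props:
  fixes S W :: "'a set" and g :: "'a set \<Rightarrow> real"
  assumes "monotone_set_fun W g" "supermodular_on W g"
  defines "h \<equiv> (\<lambda>T. g ((S \<union> T) \<inter> W) - g (S \<inter> W))"
  shows "nonneg_on D h" "monotone_set_fun D h" "supermodular_on D h"
proof -
  show "monotone_set_fun D h" unfolding monotone_set_fun_def h_def
  proof (intro allI impI)
    fix A B assume "A \<subseteq> D" "B \<subseteq> A"
    then show "g ((S \<union> B) \<inter> W) - g (S \<inter> W) \<le> g ((S \<union> A) \<inter> W) - g (S \<inter> W)"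
      using assms(1) unfolding monotone_set_fun_def by (meson Int_lower2 Int_mono Un_mono order_refl diff_right_mono)
  qed
  show "nonneg_on D h" unfolding nonneg_on_def h_def
  proof (intro allI impI)
    fix A
    have "g (S \<inter> W) \<le> g ((S \<union> A) \<inter> W)"
      using assms(1) unfolding monotone_set_fun_def by (meson Int_lower2 Int_mono Un_upper1 order_refl)
    then show "0 \<le> g ((S \<union> A) \<inter> W) - g (S \<inter> W)" by simp
  qed
  show "supermodular_on D h" unfolding supermodular_on_def h_def
  proof (intro allI impI)
    fix A B
    have "g ((S \<union> A) \<inter> W) + g ((S \<union> B) \<inter> W) \<le> g ((S \<union> A) \<inter> W \<union> (S \<union> B) \<inter> W) + g ((S \<union> A) \<inter> W \<inter> ((S \<union> B) \<inter> W))"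
      using assms(2) unfolding supermodular_on_def by blast
    moreover have "(S \<union> A) \<inter> W \<union> (S \<union> B) \<inter> W = (S \<union> (A \<union> B)) \<inter> W" by auto
    moreover have "(S \<union> A) \<inter> W \<inter> ((S \<union> B) \<inter> W) = (S \<union> (A \<inter> B)) \<inter> W" by auto
    ultimately show "g ((S \<union> A) \<inter> W) - g (S \<inter> W) + (g ((S \<union> B) \<inter> W) - g (S \<inter> W))
         \<le> g ((S \<union> (A \<union> B)) \<inter> W) - g (S \<inter> W) + (g ((S \<union> (A \<inter> B)) \<inter> W) - g (S \<inter> W))" by simp
  qed
qed

theorem lemma3:
  fixes V :: "'a set" and f :: "'a set \<Rightarrow> real" and r m :: nat
    and Vs :: "nat \<Rightarrow> 'a set" and fs :: "nat \<Rightarrow> 'a set \<Rightarrow> real" and S :: "'a set"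
  assumes "finite V"
    and "f \<in> F_r r V"
    and "r_decomposition V f r m Vs fs"
    and "f {} = 0"
    and "S \<subseteq> V" and "S \<noteq> {}"
  shows "nonneg_on (V - S) (f_S m Vs fs S)
       \<and> monotone_set_fun (V - S) (f_S m Vs fs S)
       \<and> supermodular_on (V - S) (f_S m Vs fs S)
       \<and> decomposition_idx (V - S) (f_S m Vs fs S) (r - 1) (I_S m Vs S)
           (\<lambda>i. Vs i - S) (f_i_S Vs fs S)
       \<and> (\<forall>i\<in>I_S m Vs S. nonneg_on (Vs i - S) (f_i_S Vs fs S i)
            \<and> monotone_set_fun (Vs i - S) (f_i_S Vs fs S i)
            \<and> supermodular_on (Vs i - S) (f_i_S Vs fs S i))"
proof -
  have D: "\<forall>i\<in>{1..m}. Vs i \<subseteq> V \<and> card (Vs i) \<le> r \<and> nonneg_on (Vs i) (fs i) \<and> supermodular_on (Vs i) (fs i)"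
    and E: "\<forall>T. T \<subseteq> V \<longrightarrow> f T = (\<Sum>i\<in>{1..m}. fs i (T \<inter> Vs i))"
    using assms(3) unfolding r_decomposition_def decomposition_idx_def by auto
  have "(\<Sum>i\<in>{1..m}. fs i ({} \<inter> Vs i)) = 0" using E assms(4) by auto
  hence "\<forall>i\<in>{1..m}. fs i {} = 0"
    using D by (subst (asm) sum_nonneg_eq_0_iff) (auto simp: nonneg_on_def)
  hence M: "\<forall>i\<in>{1..m}. monotone_set_fun (Vs i) (fs i)" using D mono_from by blast
  have IS: "I_S m Vs S \<subseteq> {1..m}" "finite (I_S m Vs S)" unfolding I_S_def by auto
  have fis: "f_i_S Vs fs S i = (\<lambda>T. fs i ((S \<union> T) \<inter> Vs i) - fs i (S \<inter> Vs i))" for i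
    by (rule ext) (simp add: f_i_S_def)
  have P: "nonneg_on X (f_i_S Vs fs S i) \<and> monotone_set_fun X (f_i_S Vs fs S i)
      \<and> supermodular_on X (f_i_S Vs fs S i)" if "i \<in> I_S m Vs S" for i X
    unfolding fis using shift_props M D IS that by blast
  have fS: "f_S m Vs fs S T = (\<Sum>i\<in>I_S m Vs S. f_i_S Vs fs S i T)" for T
    unfolding f_S_def f_i_S_def by simp
  have N1: "nonneg_on (V - S) (f_S m Vs fs S)"
    unfolding nonneg_on_def fS using P unfolding nonneg_on_def by (auto intro: sum_nonneg)
  have N2: "monotone_set_fun (V - S) (f_S m Vs fs S)"
    unfolding monotone_set_fun_def fS using P unfolding monotone_set_fun_def by (auto intro!: sum_mono)
  have N3: "supermodular_on (V - S) (f_S m Vs fs S)"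
    unfolding supermodular_on_def fS sum.distrib[symmetric] using P unfolding supermodular_on_def
    by (auto intro!: sum_mono)
  have card: "card (Vs i - S) \<le> r - 1" if "i \<in> I_S m Vs S" for i
  proof -
    have fin: "finite (Vs i)" using D IS that assms(1) finite_subset by blast
    have "Vs i \<inter> S \<noteq> {}" using that unfolding I_S_def by auto
    hence "card (Vs i \<inter> S) \<ge> 1" using fin by (simp add: Suc_leI card_gt_0_iff)
    moreover have "card (Vs i - S) = card (Vs i) - card (Vs i \<inter> S)" using fin
      by (metis card_Diff_subset_Int finite_Int Diff_Int2 inf_idem Int_commute)
    moreover have "card (Vs i) \<le> r" using D IS that by blast
    ultimately show ?thesis by linarith
  qed
  have dec: "decomposition_idx (V - S) (f_S m Vs fs S) (r - 1) (I_S m Vs S)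
           (\<lambda>i. Vs i - S) (f_i_S Vs fs S)"
    unfolding decomposition_idx_def
  proof (intro conjI ballI allI impI)
    fix i assume i: "i \<in> I_S m Vs S"
    show "Vs i - S \<subseteq> V - S" using D IS i by blast
    show "card (Vs i - S) \<le> r - 1" using card i .
    show "nonneg_on (Vs i - S) (f_i_S Vs fs S i)" using P i by blast
    show "supermodular_on (Vs i - S) (f_i_S Vs fs S i)" using P i by blast
  next
    fix T assume "T \<subseteq> V - S"
    have "(S \<union> T \<inter> (Vs i - S)) \<inter> Vs i = (S \<union> T) \<inter> Vs i" for i by auto
    then show "f_S m Vs fs S T = (\<Sum>i\<in>I_S m Vs S. f_i_S Vs fs S i (T \<inter> (Vs i - S)))"
      unfolding fS f_i_S_def by simp
  qed
  show ?thesis using N1 N2 N3 dec P by blast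
qed

end
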